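(* Let $A\in\mathbb{R}^{d\times d}$ be such that $\mathbf{I}_d-A$ is invertible, set $B:=(\mathbf{I}_d-A)^{-1}$, let $\mu_0,\mu_1\in\mathbb{R}^d$, $\sigma_0,\sigma_1>0$, and $D\in\mathbb{R}^{d\times d}$ a diagonal matrix with positive diagonal entries. Consider the structural causal model $\mathbf{X}_s=\mu_s+A\mathbf{X}_s+\epsilon_s$ with $\epsilon_s\sim\mathcal{N}(0,\sigma_s^2D)$, $s\in\{0,1\}$, so that $\mathbf{X}_s\sim\mathcal{N}(B\mu_s,\sigma_s^2BDB^\top)$. For a realization $\mathbf{x}_s$ of $\mathbf{X}_s$, let $\tilde{\mathbf{x}}^{\mathrm{OT}}_s$ be its image under the optimal transport map (for squared Euclidean cost) from the distribution of $\mathbf{X}_s$ to that of $\mathbf{X}_{s'}$, $s'=1-s$; this map has the form $\mathbf{x}\mapsto B\mu_{s'}+\mathbf{W}_s(\mathbf{x}-B\mu_s)$ for a matrix $\mathbf{W}_s\in\mathbb{R}^{d\times d}$. Then $\mathbf{W}_s=\sigma_{s'}\sigma_s^{-1}\mathbf{I}_d$, and consequently $\tilde{\mathbf{x}}^{\mathrm{OT}}_s=\tilde{\mathbf{x}}^{\mathrm{CF}}_s$.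
   Context: The counterfactual of $\mathbf{x}_s$ is obtained by recovering the noise $\epsilon_s=B^{-1}\mathbf{x}_s-\mu_s$, rescaling it to the other group ($\sigma_{s'}^{-1}(B^{-1}\tilde{\mathbf{x}}-\mu_{s'})=\sigma_s^{-1}(B^{-1}\mathbf{x}_s-\mu_s)$), which gives $\tilde{\mathbf{x}}^{\mathrm{CF}}_s=B\mu_{s'}+\sigma_{s'}\sigma_s^{-1}(\mathbf{x}_s-B\mu_s)$. The optimal transport map from $\mathcal{Q}_1$ to $\mathcal{Q}_2$ is the map $\mathbf{T}$ with $\mathbf{T}_{\#}\mathcal{Q}_1=\mathcal{Q}_2$ minimizing $\mathbb{E}_{\mathbf{X}\sim\mathcal{Q}_1}\|\mathbf{X}-\mathbf{T}(\mathbf{X})\|^2$. *)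

theory Defs
  imports "HOL-Probability.Probability"
begin

definition mvn_density :: "real^'n \<Rightarrow> real^'n^'n \<Rightarrow> real^'n \<Rightarrow> real" where
  "mvn_density m S x =
     exp (- ((x - m) \<bullet> (matrix_inv S *v (x - m))) / 2)
     / sqrt ((2 * pi) ^ CARD('n) * det S)"

definition mvn :: "real^'n \<Rightarrow> real^'n^'n \<Rightarrow> (real^'n) measure" where
  "mvn m S = density lborel (\<lambda>x. ennreal (mvn_density m S x))"

definition transport_map :: "('a::euclidean_space) measure \<Rightarrow> 'a measure \<Rightarrow> ('a \<Rightarrow> 'a) \<Rightarrow> bool" where
  "transport_map P Q T \<longleftrightarrow> T \<in> borel_measurable P \<and> distr P borel T = Q"

definition optimal_transport_map :: "('a::euclidean_space) measure \<Rightarrow> 'a measure \<Rightarrow> ('a \<Rightarrow> 'a) \<Rightarrow> bool" where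
  "optimal_transport_map P Q T \<longleftrightarrow> transport_map P Q T \<and>
     (\<forall>S. transport_map P Q S \<longrightarrow>
        (\<integral>\<^sup>+ x. ennreal ((norm (x - T x))\<^sup>2) \<partial>P) \<le> (\<integral>\<^sup>+ x. ennreal ((norm (x - S x))\<^sup>2) \<partial>P))"

text \<open>Distribution of X_s in the linear SCM X_s = mu_s + A X_s + eps_s, eps_s ~ N(0, sigma_s^2 D):
  X_s ~ N(B mu_s, sigma_s^2 B D B^T), with B = (I - A)^{-1}.\<close>
definition scm_law :: "real^'n^'n \<Rightarrow> real^'n^'n \<Rightarrow> real^'n \<Rightarrow> real \<Rightarrow> (real^'n) measure" where
  "scm_law B D mu sg = mvn (B *v mu) (sg\<^sup>2 *\<^sub>R (B ** D ** transpose B))"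

text \<open>Counterfactual of x_s in group s' (noise recovered and rescaled):
  B mu_{s'} + sigma_{s'} sigma_s^{-1} (x_s - B mu_s).\<close>
definition cf_map :: "real^'n^'n \<Rightarrow> real^'n \<Rightarrow> real \<Rightarrow> real^'n \<Rightarrow> real \<Rightarrow> real^'n \<Rightarrow> real^'n" where
  "cf_map B mu_s sigma_s mu_s' sigma_s' x = B *v mu_s' + (sigma_s' / sigma_s) *\<^sub>R (x - B *v mu_s)"

end

theory Submission
  imports Defs
begin


lemma minv_props:
  fixes M :: "real^'n^'n"
  assumes "invertible M"
  shows "M ** matrix_inv M = mat 1" "matrix_inv M ** M = mat 1"
proof -
  have "\<exists>A'. M ** A' = mat 1 \<and> A' ** M = mat 1" using assms unfolding invertible_def by blast
  then have "M ** matrix_inv M = mat 1 \<and> matrix_inv M ** M = mat 1"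
    unfolding matrix_inv_def by (rule someI_ex)
  then show "M ** matrix_inv M = mat 1" "matrix_inv M ** M = mat 1" by auto
qed

lemma minv_unique:
  fixes M X :: "real^'n^'n"
  assumes "M ** X = mat 1"
  shows "matrix_inv M = X"
proof -
  have inv: "invertible M" using assms matrix_left_right_inverse1 unfolding invertible_def by blast
  have "matrix_inv M = matrix_inv M ** (M ** X)" using assms by (simp add: matrix_mul_rid)
  also have "\<dots> = (matrix_inv M ** M) ** X" by (simp add: matrix_mul_assoc)
  also have "\<dots> = X" using minv_props(2)[OF inv] by (simp add: matrix_mul_lid)
  finally show ?thesis .
qed

lemma scaleR_mat_mul: "c *\<^sub>R M = mat c ** (M::real^'n^'n)"
  by (simp add: vec_eq_iff matrix_matrix_mult_def mat_def if_distrib if_distribR sum.delta cong: if_cong)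
lemma det_scaleR_mat:
  fixes M :: "real^'n^'n"
  shows "det (c *\<^sub>R M) = c ^ CARD('n) * det M"
  by (metis det_matrix_scaleR matrix_scaleR scaleR_mat_mul det_mul)

lemma inner_mat_transpose: "((A::real^'n^'n) *v x) \<bullet> y = x \<bullet> (transpose A *v y)"
  by (metis dot_lmul_matrix inner_commute vector_transpose_matrix)

lemma nn_integral_affine_eucl:
  fixes f :: "'a::euclidean_space \<Rightarrow> ennreal" and c :: real
  assumes [measurable]: "f \<in> borel_measurable borel" and c: "c \<noteq> 0"
  shows "(\<integral>\<^sup>+x. f x \<partial>lborel) = ennreal (\<bar>c\<bar> ^ DIM('a)) * (\<integral>\<^sup>+x. f (t + c *\<^sub>R x) \<partial>lborel)"
  by (subst lborel_affine[OF c, of t])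
     (simp add: nn_integral_density nn_integral_distr nn_integral_cmult)

lemma gauss1_finite:
  assumes b: "b > 0"
  shows "(\<integral>\<^sup>+t. ennreal (exp (- b * t^2)) \<partial>lborel) < \<infinity>"
proof -
  define \<sigma> where "\<sigma> = sqrt (1 / (2 * b))"
  have s: "\<sigma> > 0" "\<sigma>^2 = 1 / (2*b)" using b by (auto simp: \<sigma>_def)
  have eq: "exp (- b * t^2) = sqrt (2 * pi * \<sigma>^2) * normal_density 0 \<sigma> t" for t
    using s b by (simp add: normal_density_def field_simps)
  have "(\<integral>\<^sup>+t. ennreal (normal_density 0 \<sigma> t) \<partial>lborel) = ennreal (\<integral>t. normal_density 0 \<sigma> t \<partial>lborel)"
    by (rule nn_integral_eq_integral) (auto intro: integrable_normal_density[OF s(1)])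
  also have "\<dots> = 1" using integral_normal_density[OF s(1)] by simp
  finally have n1: "(\<integral>\<^sup>+t. ennreal (normal_density 0 \<sigma> t) \<partial>lborel) = 1" .
  have "(\<integral>\<^sup>+t. ennreal (exp (- b * t^2)) \<partial>lborel) = (\<integral>\<^sup>+t. ennreal (sqrt (2 * pi * \<sigma>^2)) * ennreal (normal_density 0 \<sigma> t) \<partial>lborel)"
    unfolding eq by (intro nn_integral_cong) (simp add: ennreal_mult)
  also have "\<dots> = ennreal (sqrt (2 * pi * \<sigma>^2))"
    by (simp add: nn_integral_cmult n1)
  finally show ?thesis by simp
qed

lemma gauss_finite:
  assumes b: "b > 0"
  shows "(\<integral>\<^sup>+u. ennreal (exp (- b * (norm (u::'a::euclidean_space))^2)) \<partial>lborel) < \<infinity>"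
proof -
  have eq: "ennreal (exp (- b * (norm u)^2)) = (\<Prod>j\<in>Basis. ennreal (exp (- b * (u \<bullet> j)^2)))" for u :: 'a
  proof -
    have "(norm u)^2 = (\<Sum>j\<in>Basis. (u \<bullet> j)^2)"
      unfolding power2_norm_eq_inner by (subst euclidean_inner) (simp add: power2_eq_square)
    then have "exp (- b * (norm u)^2) = (\<Prod>j\<in>Basis. exp (- b * (u \<bullet> j)^2))"
      by (simp add: sum_distrib_left exp_sum[symmetric] sum_negf)
    then show ?thesis by (simp add: prod_ennreal)
  qed
  have "(\<integral>\<^sup>+u. ennreal (exp (- b * (norm (u::'a))^2)) \<partial>lborel) = (\<Prod>j\<in>(Basis::'a set). (\<integral>\<^sup>+t. ennreal (exp (- b * t^2)) \<partial>lborel))"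
    unfolding eq by (rule nn_integral_lborel_prod) auto
  also have "\<dots> < \<infinity>" using gauss1_finite[OF b] by (simp add: power_less_top_ennreal)
  finally show ?thesis .
qed
lemma cost_identity0:
  fixes d u v :: "'a::real_inner"
  assumes c: "c > 0"
  shows "(norm (d + u - v))^2 = ((norm d)^2 + 2 * (d \<bullet> u) + (1 - c) * (norm u)^2)
     + (- 2 * (d \<bullet> v) + (1 - 1/c) * (norm v)^2) + (norm (c *\<^sub>R u - v))^2 / c"
proof -
  have "(norm (d + u - v))^2 = d \<bullet> d + u \<bullet> u + v \<bullet> v + 2 * (d \<bullet> u) - 2 * (d \<bullet> v) - 2 * (u \<bullet> v)"
    unfolding power2_norm_eq_inner by (simp add: inner_simps inner_commute algebra_simps)
  moreover have "(norm (c *\<^sub>R u - v))^2 = c^2 * (u \<bullet> u) - 2 * c * (u \<bullet> v) + (v \<bullet> v)"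
    unfolding power2_norm_eq_inner using c by (simp add: inner_simps inner_commute algebra_simps power2_eq_square)
  moreover have "(norm d)^2 = d \<bullet> d" "(norm u)^2 = u \<bullet> u" "(norm v)^2 = v \<bullet> v"
    by (simp_all add: power2_norm_eq_inner)
  ultimately show ?thesis
    using c by (simp only:) (simp add: field_simps power2_eq_square)
qed

lemma cost_identity:
  fixes x y m m' :: "'a::real_inner"
  assumes c: "c > 0"
  shows "(norm (x - y))^2 = ((norm (m - m'))^2 + 2 * ((m - m') \<bullet> (x - m)) + (1 - c) * (norm (x - m))^2)
     + (- 2 * ((m - m') \<bullet> (y - m')) + (1 - 1/c) * (norm (y - m'))^2)
     + (norm (c *\<^sub>R (x - m) - (y - m')))^2 / c"
proof -
  have e: "(m - m') + (x - m) - (y - m') = x - y" by (simp add: algebra_simps)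
  show ?thesis using cost_identity0[OF c, of "m - m'" "x - m" "y - m'"] unfolding e .
qed

definition "Gf m m' c x = (norm (m - m'))^2 + 2 * ((m - m') \<bullet> (x - m)) + (1 - c) * (norm (x - m))^2"
definition "Hf m m' c y = - 2 * ((m - m') \<bullet> (y - m')) + (1 - 1/c) * (norm (y - m'))^2"

lemma Gf_meas[measurable]: "Gf m m' c \<in> borel_measurable borel"
  unfolding Gf_def by (intro borel_measurable_continuous_onI continuous_intros)
lemma Hf_meas[measurable]: "Hf m m' c \<in> borel_measurable borel"
  unfolding Hf_def by (intro borel_measurable_continuous_onI continuous_intros)

locale gs =
  fixes N D :: "real^'n^'n"
  assumes invN: "invertible N"
    and Ddiag: "\<forall>i j. i \<noteq> j \<longrightarrow> D $ i $ j = 0"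
    and Dpos: "\<forall>i. D $ i $ i > 0"
begin

definition "B = matrix_inv N"
definition "S0 = B ** D ** transpose B"
definition "Mi = matrix_inv S0"
definition "Z = sqrt ((2 * pi) ^ CARD('n) * det S0)"
definition "dmin = Min (range (\<lambda>i. D $ i $ i))"

lemma BN: "B ** N = mat 1" "N ** B = mat 1"
  using minv_props[OF invN] unfolding B_def by auto

lemma detD: "det D > 0"
proof -
  have "det D = (\<Prod>i\<in>UNIV. D $ i $ i)" by (rule det_diagonal) (use Ddiag in auto)
  also have "\<dots> > 0" using Dpos by (simp add: prod_pos)
  finally show ?thesis .
qed

lemma detB: "det B \<noteq> 0"
proof -
  have "det B * det N = 1" using BN(1) by (metis det_I det_mul)
  then show ?thesis by auto
qed

lemma detS0: "det S0 > 0"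
proof -
  have "det S0 = det B * det D * det B" unfolding S0_def by (simp add: det_mul det_transpose)
  also have "\<dots> = (det B)^2 * det D" by (simp add: power2_eq_square)
  also have "\<dots> > 0" using detB detD by simp
  finally show ?thesis .
qed

lemma S0inv: "S0 ** Mi = mat 1" "Mi ** S0 = mat 1"
proof -
  have "invertible S0" using detS0 by (simp add: invertible_det_nz)
  then show "S0 ** Mi = mat 1" "Mi ** S0 = mat 1" using minv_props unfolding Mi_def by auto
qed

lemma S0_Mi_vec: "S0 *v (Mi *v u) = u"
  by (simp add: matrix_vector_mul_assoc S0inv matrix_vector_mul_lid)

lemma Zpos: "Z > 0" unfolding Z_def using detS0 by simp

lemma dmin_pos: "dmin > 0" and dmin_le: "dmin \<le> D $ i $ i"
proof -
  have "dmin \<in> range (\<lambda>i. D $ i $ i)" unfolding dmin_def by (rule Min_in) auto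
  then show "dmin > 0" using Dpos by auto
  show "dmin \<le> D $ i $ i" unfolding dmin_def by (rule Min_le) auto
qed

lemma quad_lower: "\<exists>lam>0. \<forall>u. lam * (norm u)^2 \<le> u \<bullet> (Mi *v u)"
proof -
  have "linear (\<lambda>z. (B ** D) *v z)" by (rule matrix_vector_mul_linear)
  then have lin: "linear (\<lambda>z. B *v (D *v z))" by (simp add: matrix_vector_mul_assoc)
  obtain K where K: "K > 0" "\<And>z. norm (B *v (D *v z)) \<le> K * norm z"
    using linear_bounded_pos[OF lin] by blast
  have "dmin / K^2 * (norm u)^2 \<le> u \<bullet> (Mi *v u)" for u
  proof -
    define w where "w = Mi *v u"
    define z where "z = transpose B *v w"
    have u: "u = B *v (D *v z)" unfolding z_def w_def
      by (metis S0_Mi_vec S0_def matrix_vector_mul_assoc)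
    have q: "u \<bullet> (Mi *v u) = (D *v z) \<bullet> z"
      by (metis u inner_mat_transpose w_def z_def)
    have Dz: "(D *v z) $ i = D $ i $ i * z $ i" for i
    proof -
      have "(D *v z) $ i = (\<Sum>j\<in>UNIV. D $ i $ j * z $ j)" by (simp add: matrix_vector_mult_def)
      also have "\<dots> = (\<Sum>j\<in>UNIV. if j = i then D $ i $ i * z $ i else 0)"
        by (rule sum.cong) (use Ddiag in auto)
      also have "\<dots> = D $ i $ i * z $ i" by simp
      finally show ?thesis .
    qed
    have dz: "(D *v z) \<bullet> z = (\<Sum>i\<in>UNIV. D $ i $ i * (z $ i)^2)"
      by (simp add: inner_vec_def Dz power2_eq_square mult.assoc)
    have nz: "(norm z)^2 = (\<Sum>i\<in>UNIV. (z $ i)^2)"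
      unfolding power2_norm_eq_inner inner_vec_def by (simp add: power2_eq_square)
    have "dmin * (norm z)^2 \<le> (\<Sum>i\<in>UNIV. D $ i $ i * (z $ i)^2)"
      unfolding nz sum_distrib_left by (rule sum_mono) (simp add: dmin_le mult_right_mono)
    moreover have "(norm u)^2 \<le> K^2 * (norm z)^2"
    proof -
      have "norm u \<le> K * norm z" using K(2) u by simp
      then have "(norm u)^2 \<le> (K * norm z)^2" by (simp add: power_mono)
      then show ?thesis by (simp add: power_mult_distrib)
    qed
    ultimately have "dmin * (norm u)^2 \<le> K^2 * (u \<bullet> (Mi *v u))" using q dz dmin_pos
      by (smt (verit, best) mult_left_mono mult.commute mult.left_commute zero_le_power2 K(1))
    then show ?thesis using K(1) by (simp add: field_simps)
  qed
  then show ?thesis using dmin_pos K(1) by (intro exI[of _ "dmin / K^2"]) auto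
qed


definition "dens k u = exp (- (u \<bullet> (Mi *v u)) / (2 * k^2)) / (k ^ CARD('n) * Z)"

lemma mvn_dens:
  assumes k: "k > 0"
  shows "mvn_density m (k\<^sup>2 *\<^sub>R S0) x = dens k (x - m)"
proof -
  have "(k\<^sup>2 *\<^sub>R S0) ** ((1/k\<^sup>2) *\<^sub>R Mi) = mat 1"
    using k by (simp add: matrix_scalar_ac scalar_matrix_assoc[symmetric] S0inv)
  then have mi: "matrix_inv (k\<^sup>2 *\<^sub>R S0) = (1/k\<^sup>2) *\<^sub>R Mi" by (rule minv_unique)
  have dt: "det (k\<^sup>2 *\<^sub>R S0) = (k ^ CARD('n))^2 * det S0"
    by (simp add: det_scaleR_mat power_mult[symmetric] mult.commute)
  have sq: "sqrt ((2 * pi) ^ CARD('n) * det (k\<^sup>2 *\<^sub>R S0)) = k ^ CARD('n) * Z"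
    unfolding dt Z_def using k by (simp add: real_sqrt_mult mult.commute mult.left_commute)
  show ?thesis unfolding mvn_density_def dens_def mi sq
    by (simp add: scaleR_matrix_vector_assoc[symmetric] mult.commute)
qed

lemma dens_pos: "k > 0 \<Longrightarrow> dens k u > 0"
  unfolding dens_def using Zpos by simp

lemma dens_scale:
  assumes "k > 0" "c > 0"
  shows "c ^ CARD('n) * dens (c * k) (c *\<^sub>R u) = dens k u"
proof -
  have "Mi *v (c *\<^sub>R u) = c *\<^sub>R (Mi *v u)"
    by (simp add: matrix_vector_mult_def vec_eq_iff sum_distrib_left mult.left_commute)
  then show ?thesis using assms Zpos unfolding dens_def
    by (simp add: power_mult_distrib field_simps power2_eq_square)
qed

lemma dens_cont: "continuous_on UNIV (dens k)"
proof (cases "k = 0")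
  case True
  then show ?thesis by (simp add: dens_def)
next
  case False
  have "continuous_on UNIV (\<lambda>u. Mi *v u)"
    by (simp add: linear_continuous_on matrix_vector_mul_linear linear_linear)
  then show ?thesis unfolding dens_def using False Zpos by (intro continuous_intros) auto
qed

lemma dens_meas[measurable]: "dens k \<in> borel_measurable borel"
  by (rule borel_measurable_continuous_onI[OF dens_cont])

lemma dens_bound:
  assumes k: "k > 0"
  shows "\<exists>a>0. \<forall>u. dens k u \<le> exp (- a * (norm u)^2) / (k ^ CARD('n) * Z)"
proof -
  obtain lam where lam: "lam > 0" "\<And>u. lam * (norm u)^2 \<le> u \<bullet> (Mi *v u)"
    using quad_lower by blast
  have "dens k u \<le> exp (- (lam / (2*k^2)) * (norm u)^2) / (k ^ CARD('n) * Z)" for u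
  proof -
    have "- (u \<bullet> (Mi *v u)) / (2 * k^2) \<le> - (lam / (2*k^2)) * (norm u)^2"
      using lam(2)[of u] k by (simp add: field_simps)
    then show ?thesis unfolding dens_def using k Zpos
      by (intro divide_right_mono) auto
  qed
  then show ?thesis using lam k by (intro exI[of _ "lam / (2*k^2)"]) auto
qed


lemma mvn_eq: "k > 0 \<Longrightarrow> mvn m (k\<^sup>2 *\<^sub>R S0) = density lborel (\<lambda>x. ennreal (dens k (x - m)))"
  unfolding mvn_def by (simp add: mvn_dens)

lemma transport:
  assumes p: "p > 0" and q: "q > 0"
  shows "distr (mvn m (p\<^sup>2 *\<^sub>R S0)) borel (\<lambda>x. m' + (q/p) *\<^sub>R (x - m)) = mvn m' (q\<^sup>2 *\<^sub>R S0)"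
proof -
  define c where "c = q / p"
  have c: "c > 0" "q = c * p" using p q by (auto simp: c_def)
  define T where "T = (\<lambda>x::real^'n. m' + c *\<^sub>R (x - m))"
  have Tm[measurable]: "T \<in> borel_measurable borel" unfolding T_def by measurable
  show ?thesis
    unfolding mvn_eq[OF p] mvn_eq[OF q] c_def[symmetric] T_def[symmetric]
  proof (rule measure_eqI)
    fix A assume "A \<in> sets (distr (density lborel (\<lambda>x. ennreal (dens p (x - m)))) borel T)"
    then have A[measurable]: "A \<in> sets borel" by simp
    have TA: "T -` A \<in> sets borel" using measurable_sets[OF Tm A] by simp
    have "emeasure (distr (density lborel (\<lambda>x. ennreal (dens p (x - m)))) borel T) A
        = emeasure (density lborel (\<lambda>x. ennreal (dens p (x - m)))) (T -` A)"
      by (subst emeasure_distr) auto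
    also have "\<dots> = (\<integral>\<^sup>+x. ennreal (dens p (x - m)) * indicator (T -` A) x \<partial>lborel)"
      by (subst emeasure_density) (auto simp: TA)
    also have "\<dots> = (\<integral>\<^sup>+x. ennreal (c ^ CARD('n)) * (ennreal (dens q (T x - m')) * indicator A (T x)) \<partial>lborel)"
    proof (rule nn_integral_cong)
      fix x
      have "T x - m' = c *\<^sub>R (x - m)" unfolding T_def by simp
      then have "c ^ CARD('n) * dens q (T x - m') = dens p (x - m)"
        using dens_scale[OF p c(1)] c by simp
      then show "ennreal (dens p (x - m)) * indicator (T -` A) x = ennreal (c ^ CARD('n)) * (ennreal (dens q (T x - m')) * indicator A (T x))"
        using c(1) dens_pos[OF q, of "T x - m'"] by (auto simp: indicator_def ennreal_mult[symmetric])
    qed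
    also have "\<dots> = (\<integral>\<^sup>+y. ennreal (dens q (y - m')) * indicator A y \<partial>lborel)"
      using nn_integral_affine_eucl[of "\<lambda>y. ennreal (dens q (y - m')) * indicator A y" c "m' - c *\<^sub>R m"] c(1)
      by (simp add: T_def algebra_simps nn_integral_cmult)
    also have "\<dots> = emeasure (density lborel (\<lambda>x. ennreal (dens q (x - m')))) A"
      by (subst emeasure_density) auto
    finally show "emeasure (distr (density lborel (\<lambda>x. ennreal (dens p (x - m)))) borel T) A
        = emeasure (density lborel (\<lambda>x. ennreal (dens q (x - m')))) A" .
  qed simp
qed


lemma pointwise_moment:
  fixes t a :: real
  assumes "a > 0" "t \<ge> 0"
  shows "t * exp (- a * t) \<le> (2 / a) * exp (- (a/2) * t)"
proof -
  have "a * t / 2 \<le> exp (a * t / 2)" using exp_ge_add_one_self[of "a*t/2"] by linarith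
  then have "t \<le> (2/a) * exp (a * t / 2)" using assms by (simp add: field_simps)
  then have "t * exp (- a * t) \<le> (2/a) * exp (a * t / 2) * exp (- a * t)"
    by (intro mult_right_mono) auto
  also have "\<dots> = (2 / a) * exp (- (a/2) * t)" by (simp add: mult.assoc exp_add[symmetric])
  finally show ?thesis .
qed

lemma moment:
  assumes k: "k > 0"
  shows "(\<integral>\<^sup>+x. ennreal (1 + (norm x)^2) \<partial>mvn m (k\<^sup>2 *\<^sub>R S0)) < \<infinity>"
proof -
  obtain a where a: "a > 0" "\<And>u. dens k u \<le> exp (- a * (norm u)^2) / (k ^ CARD('n) * Z)"
    using dens_bound[OF k] by blast
  define C0 where "C0 = 1 / (k ^ CARD('n) * Z)"
  have C0: "C0 > 0" using k Zpos by (simp add: C0_def)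
  define C where "C = C0 * (1 + 2 * (norm m)^2 + 4 / a)"
  have C: "C > 0" using C0 a by (simp add: C_def add_pos_nonneg)
  have pw: "(1 + (norm x)^2) * dens k (x - m) \<le> C * exp (- (a/2) * (norm (x - m))^2)" for x
  proof -
    define u where "u = x - m"
    define t where "t = (norm u)^2"
    have t0: "t \<ge> 0" by (simp add: t_def)
    have "norm x \<le> norm m + norm u" unfolding u_def by (metis add_diff_cancel_left' norm_triangle_ineq diff_add_cancel add.commute)
    then have "(norm x)^2 \<le> (norm m + norm u)^2" by (simp add: power_mono)
    also have "\<dots> \<le> 2 * (norm m)^2 + 2 * t" unfolding t_def
      by (smt (verit) sum_squares_bound power2_sum)
    finally have nx: "1 + (norm x)^2 \<le> (1 + 2 * (norm m)^2) + 2 * t" by simp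
    have dk: "dens k u \<le> C0 * exp (- a * t)" using a(2)[of u] by (simp add: C0_def t_def)
    have d0: "dens k u \<ge> 0" using dens_pos[OF k] less_imp_le by blast
    have "(1 + (norm x)^2) * dens k u \<le> ((1 + 2 * (norm m)^2) + 2 * t) * (C0 * exp (- a * t))"
      using nx dk d0 t0 by (intro mult_mono) auto
    also have "\<dots> = C0 * ((1 + 2 * (norm m)^2) * exp (- a * t) + 2 * (t * exp (- a * t)))"
      by (simp add: algebra_simps)
    also have "\<dots> \<le> C0 * ((1 + 2 * (norm m)^2) * exp (- (a/2) * t) + 2 * ((2/a) * exp (- (a/2) * t)))"
      using pointwise_moment[OF a(1) t0] C0 a(1) t0
      by (intro mult_left_mono add_mono mult_left_mono) (auto simp: mult_nonneg_nonneg)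
    also have "\<dots> = C * exp (- (a/2) * t)" by (simp add: C_def algebra_simps)
    finally show ?thesis by (simp add: u_def t_def)
  qed
  have "(\<integral>\<^sup>+x. ennreal (1 + (norm x)^2) \<partial>mvn m (k\<^sup>2 *\<^sub>R S0))
      = (\<integral>\<^sup>+x. ennreal (dens k (x - m)) * ennreal (1 + (norm x)^2) \<partial>lborel)"
    unfolding mvn_eq[OF k] by (subst nn_integral_density) auto
  also have "\<dots> \<le> (\<integral>\<^sup>+x. ennreal (C * exp (- (a/2) * (norm (x - m))^2)) \<partial>lborel)"
  proof (intro nn_integral_mono)
    fix x
    have "ennreal (dens k (x - m)) * ennreal (1 + (norm x)^2) = ennreal (dens k (x - m) * (1 + (norm x)^2))"
      using dens_pos[OF k, of "x - m"] by (simp add: ennreal_mult)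
    also have "\<dots> \<le> ennreal (C * exp (- (a/2) * (norm (x - m))^2))"
      using pw[of x] by (intro ennreal_leI) (simp add: mult.commute)
    finally show "ennreal (dens k (x - m)) * ennreal (1 + (norm x)^2) \<le> ennreal (C * exp (- (a/2) * (norm (x - m))^2))" .
  qed
  also have "\<dots> = (\<integral>\<^sup>+x. ennreal (C * exp (- (a/2) * (norm (x::real^'n))^2)) \<partial>lborel)"
    by (subst nn_integral_affine_eucl[of _ 1 m]) auto
  also have "\<dots> = ennreal C * (\<integral>\<^sup>+x. ennreal (exp (- (a/2) * (norm (x::real^'n))^2)) \<partial>lborel)"
    using C by (simp add: ennreal_mult nn_integral_cmult)
  also have "\<dots> < \<infinity>" using gauss_finite[of "a/2", where 'a="real^'n"] a(1) by (simp add: ennreal_mult_less_top)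
  finally show ?thesis .
qed


lemma sets_mvn[simp, measurable_cong]: "sets (mvn m' S') = sets borel" by (simp add: mvn_def)
lemma space_mvn[simp]: "space (mvn m' S') = UNIV" by (simp add: mvn_def)

lemma integ_bound:
  assumes k: "k > 0" and f[measurable]: "f \<in> borel_measurable borel" and K: "K \<ge> 0"
    and b: "\<And>x. \<bar>f x\<bar> \<le> K * (1 + (norm x)^2)"
  shows "integrable (mvn m0 (k\<^sup>2 *\<^sub>R S0)) f"
proof (subst integrable_iff_bounded, intro conjI)
  show "f \<in> borel_measurable (mvn m0 (k\<^sup>2 *\<^sub>R S0))" by simp
  have "(\<integral>\<^sup>+x. ennreal (norm (f x)) \<partial>mvn m0 (k\<^sup>2 *\<^sub>R S0)) \<le> (\<integral>\<^sup>+x. ennreal K * ennreal (1 + (norm x)^2) \<partial>mvn m0 (k\<^sup>2 *\<^sub>R S0))"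
  proof (intro nn_integral_mono)
    fix x
    have "ennreal (norm (f x)) \<le> ennreal (K * (1 + (norm x)^2))" using b[of x] by (intro ennreal_leI) simp
    also have "\<dots> = ennreal K * ennreal (1 + (norm x)^2)" using K by (intro ennreal_mult) auto
    finally show "ennreal (norm (f x)) \<le> ennreal K * ennreal (1 + (norm x)^2)" .
  qed
  also have "\<dots> = ennreal K * (\<integral>\<^sup>+x. ennreal (1 + (norm x)^2) \<partial>mvn m0 (k\<^sup>2 *\<^sub>R S0))"
    by (rule nn_integral_cmult) simp
  also have "\<dots> < \<infinity>" using moment[OF k] by (simp add: ennreal_mult_less_top)
  finally show "(\<integral>\<^sup>+x. ennreal (norm (f x)) \<partial>mvn m0 (k\<^sup>2 *\<^sub>R S0)) < \<infinity>" .
qed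

lemma integ_sq:
  assumes k: "k > 0"
  shows "integrable (mvn m0 (k\<^sup>2 *\<^sub>R S0)) (\<lambda>x. (norm (x - a))^2)"
proof (rule integ_bound[OF k, where K="2 + 2 * (norm a)^2"])
  fix x :: "real^'n"
  have "norm (x - a) \<le> norm x + norm a" by (rule norm_triangle_ineq4)
  then have "(norm (x - a))^2 \<le> (norm x + norm a)^2" by (simp add: power_mono)
  also have "\<dots> \<le> 2 * (norm x)^2 + 2 * (norm a)^2" by (smt (verit) sum_squares_bound power2_sum)
  also have "\<dots> \<le> (2 + 2 * (norm a)^2) * (1 + (norm x)^2)" by (simp add: algebra_simps)
  finally show "\<bar>(norm (x - a))^2\<bar> \<le> (2 + 2 * (norm a)^2) * (1 + (norm x)^2)" by simp
qed auto

lemma integ_lin: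
  assumes k: "k > 0"
  shows "integrable (mvn m0 (k\<^sup>2 *\<^sub>R S0)) (\<lambda>x. d \<bullet> (x - a))"
proof (rule integ_bound[OF k, where K="norm d * (1 + norm a)"])
  fix x :: "real^'n"
  have t: "norm x \<le> 1 + (norm x)^2" by (smt (verit) power2_eq_square sum_squares_bound zero_le_power2 le_add_same_cancel2 mult_le_cancel_left1 norm_ge_zero)
  have "\<bar>d \<bullet> (x - a)\<bar> \<le> norm d * norm (x - a)" by (rule Cauchy_Schwarz_ineq2)
  also have "\<dots> \<le> norm d * (norm x + norm a)" by (intro mult_left_mono norm_triangle_ineq4) simp
  also have "\<dots> \<le> norm d * ((1 + (norm x)^2) + norm a * (1 + (norm x)^2))"
    using t by (intro mult_left_mono add_mono) (auto simp: mult_le_cancel_left1 mult_right_mono)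
  also have "\<dots> = norm d * (1 + norm a) * (1 + (norm x)^2)" by (simp add: algebra_simps)
  finally show "\<bar>d \<bullet> (x - a)\<bar> \<le> norm d * (1 + norm a) * (1 + (norm x)^2)" .
qed auto

lemma integ_const:
  assumes k: "k > 0"
  shows "integrable (mvn m0 (k\<^sup>2 *\<^sub>R S0)) (\<lambda>x. a::real)"
  by (rule integ_bound[OF k, where K="\<bar>a\<bar>"]) (auto simp: mult_le_cancel_left1)

lemma integ_G:
  assumes k: "k > 0"
  shows "integrable (mvn m0 (k\<^sup>2 *\<^sub>R S0)) (Gf m m' c)"
proof -
  have "integrable (mvn m0 (k\<^sup>2 *\<^sub>R S0)) (\<lambda>x. (norm (m - m'))^2 + 2 * ((m - m') \<bullet> (x - m)) + (1 - c) * (norm (x - m))^2)"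
    by (intro Bochner_Integration.integrable_add integrable_mult_right integ_sq[OF k] integ_lin[OF k] integ_const[OF k])
  then show ?thesis unfolding Gf_def by simp
qed

lemma integ_H:
  assumes k: "k > 0"
  shows "integrable (mvn m0 (k\<^sup>2 *\<^sub>R S0)) (Hf m m' c)"
proof -
  have "integrable (mvn m0 (k\<^sup>2 *\<^sub>R S0)) (\<lambda>y. - 2 * ((m - m') \<bullet> (y - m')) + (1 - 1/c) * (norm (y - m'))^2)"
    by (intro Bochner_Integration.integrable_add integrable_mult_right integ_sq[OF k] integ_lin[OF k])
  then show ?thesis unfolding Hf_def by simp
qed


definition "I0 p q m m' = (\<integral>x. Gf m m' (q/p) x \<partial>mvn m (p\<^sup>2 *\<^sub>R S0)) + (\<integral>y. Hf m m' (q/p) y \<partial>mvn m' (q\<^sup>2 *\<^sub>R S0))"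

lemma cost_decomp:
  assumes p: "p > 0" and q: "q > 0"
    and Sm[measurable]: "S \<in> borel_measurable (mvn m (p\<^sup>2 *\<^sub>R S0))"
    and Sd: "distr (mvn m (p\<^sup>2 *\<^sub>R S0)) borel S = mvn m' (q\<^sup>2 *\<^sub>R S0)"
  defines "R \<equiv> (\<lambda>x. (norm ((q/p) *\<^sub>R (x - m) - (S x - m')))^2 / (q/p))"
  shows "integrable (mvn m (p\<^sup>2 *\<^sub>R S0)) R"
    and "(\<integral>\<^sup>+x. ennreal ((norm (x - S x))^2) \<partial>mvn m (p\<^sup>2 *\<^sub>R S0)) = ennreal (I0 p q m m' + (\<integral>x. R x \<partial>mvn m (p\<^sup>2 *\<^sub>R S0)))"
    and "I0 p q m m' + (\<integral>x. R x \<partial>mvn m (p\<^sup>2 *\<^sub>R S0)) \<ge> 0"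
proof -
  define P where "P = mvn m (p\<^sup>2 *\<^sub>R S0)"
  define Q where "Q = mvn m' (q\<^sup>2 *\<^sub>R S0)"
  define c where "c = q / p"
  have c: "c > 0" using p q by (simp add: c_def)
  have Sm': "S \<in> measurable P borel" using Sm by (simp add: P_def)
  have Sd': "distr P borel S = Q" using Sd by (simp add: P_def Q_def)
  define F where "F = (\<lambda>x. (norm (x - S x))^2)"
  have Fm[measurable]: "F \<in> borel_measurable P" unfolding F_def P_def by measurable
  have iG: "integrable P (Gf m m' c)" unfolding P_def by (rule integ_G[OF p])
  have iHQ: "integrable Q (Hf m m' c)" unfolding Q_def by (rule integ_H[OF q])
  have iH: "integrable P (\<lambda>x. Hf m m' c (S x))"
    using iHQ unfolding Sd'[symmetric] by (subst (asm) integrable_distr_eq[OF Sm']) auto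
  have iHeq: "(\<integral>x. Hf m m' c (S x) \<partial>P) = (\<integral>y. Hf m m' c y \<partial>Q)"
    unfolding Sd'[symmetric] by (subst integral_distr[OF Sm']) auto
  have iN2Q: "integrable Q (\<lambda>y. (norm (y - 0))^2)" unfolding Q_def by (rule integ_sq[OF q])
  have iN2S: "integrable P (\<lambda>x. (norm (S x - 0))^2)"
    using iN2Q unfolding Sd'[symmetric] by (subst (asm) integrable_distr_eq[OF Sm']) auto
  have iN2: "integrable P (\<lambda>x. (norm (x - 0))^2)" unfolding P_def by (rule integ_sq[OF p])
  have iF: "integrable P F"
  proof (rule Bochner_Integration.integrable_bound[OF Bochner_Integration.integrable_add[OF integrable_mult_right[OF iN2, of 2] integrable_mult_right[OF iN2S, of 2]]])
    show "F \<in> borel_measurable P" by (rule Fm)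
    show "AE x in P. norm (F x) \<le> norm (2 * (norm (x - 0))^2 + 2 * (norm (S x - 0))^2)"
    proof (intro AE_I2)
      fix x
      have "norm (x - S x) \<le> norm x + norm (S x)" by (rule norm_triangle_ineq4)
      then have "(norm (x - S x))^2 \<le> (norm x + norm (S x))^2" by (simp add: power_mono)
      also have "\<dots> \<le> 2 * (norm x)^2 + 2 * (norm (S x))^2" by (smt (verit) sum_squares_bound power2_sum)
      finally show "norm (F x) \<le> norm (2 * (norm (x - 0))^2 + 2 * (norm (S x - 0))^2)" by (simp add: F_def)
    qed
  qed
  have Req: "R x = F x - Gf m m' c x - Hf m m' c (S x)" for x
    using cost_identity[OF c, of x "S x" m m'] unfolding R_def F_def Gf_def Hf_def c_def[symmetric] by simp
  have Rfun: "R = (\<lambda>x. F x - Gf m m' c x - Hf m m' c (S x))" using Req by auto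
  have iR: "integrable P R" unfolding Rfun using iF iG iH by auto
  then show "integrable (mvn m (p\<^sup>2 *\<^sub>R S0)) R" by (simp add: P_def)
  have intF: "(\<integral>x. F x \<partial>P) = I0 p q m m' + (\<integral>x. R x \<partial>P)"
  proof -
    have "F = (\<lambda>x. Gf m m' c x + Hf m m' c (S x) + R x)" using Req by auto
    then have "(\<integral>x. F x \<partial>P) = (\<integral>x. Gf m m' c x \<partial>P) + (\<integral>x. Hf m m' c (S x) \<partial>P) + (\<integral>x. R x \<partial>P)"
      using iG iH iR by simp
    then show ?thesis unfolding I0_def iHeq using P_def Q_def c_def by simp
  qed
  have "(\<integral>\<^sup>+x. ennreal (F x) \<partial>P) = ennreal (\<integral>x. F x \<partial>P)"
    by (rule nn_integral_eq_integral[OF iF]) (simp add: F_def)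
  then show "(\<integral>\<^sup>+x. ennreal ((norm (x - S x))^2) \<partial>mvn m (p\<^sup>2 *\<^sub>R S0)) = ennreal (I0 p q m m' + (\<integral>x. R x \<partial>mvn m (p\<^sup>2 *\<^sub>R S0)))"
    using intF by (simp add: F_def P_def)
  have "(\<integral>x. F x \<partial>P) \<ge> 0" by (rule integral_nonneg_AE) (simp add: F_def)
  then show "I0 p q m m' + (\<integral>x. R x \<partial>mvn m (p\<^sup>2 *\<^sub>R S0)) \<ge> 0" using intF by (simp add: P_def)
qed


lemma opt_iff:
  assumes p: "p > 0" and q: "q > 0"
  shows "optimal_transport_map (mvn m (p\<^sup>2 *\<^sub>R S0)) (mvn m' (q\<^sup>2 *\<^sub>R S0)) (\<lambda>x. m' + W *v (x - m))
     \<longleftrightarrow> W = (q/p) *\<^sub>R mat 1"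
proof -
  define P where "P = mvn m (p\<^sup>2 *\<^sub>R S0)"
  define Q where "Q = mvn m' (q\<^sup>2 *\<^sub>R S0)"
  define c where "c = q / p"
  have c: "c > 0" using p q by (simp add: c_def)
  define Tc where "Tc = (\<lambda>x::real^'n. m' + c *\<^sub>R (x - m))"
  have Tcm: "Tc \<in> borel_measurable P" unfolding Tc_def P_def by measurable
  have Tcd: "distr P borel Tc = Q" unfolding Tc_def P_def Q_def c_def by (rule transport[OF p q])
  have Tctr: "transport_map P Q Tc" unfolding transport_map_def using Tcm Tcd by simp
  have R0: "(\<lambda>x. (norm ((q/p) *\<^sub>R (x - m) - (Tc x - m')))^2 / (q/p)) = (\<lambda>x. 0)"
    by (auto simp: Tc_def c_def)
  have costTc: "(\<integral>\<^sup>+x. ennreal ((norm (x - Tc x))^2) \<partial>P) = ennreal (I0 p q m m')"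
    using cost_decomp(2)[OF p q Tcm[unfolded P_def] Tcd[unfolded P_def Q_def]] unfolding R0 P_def by simp
  have I0nn: "I0 p q m m' \<ge> 0"
    using cost_decomp(3)[OF p q Tcm[unfolded P_def] Tcd[unfolded P_def Q_def]] unfolding R0 by simp
  have Rnn: "(\<integral>x. (norm ((q/p) *\<^sub>R (x - m) - (S x - m')))^2 / (q/p) \<partial>P) \<ge> 0" for S
    using p q by (intro integral_nonneg_AE) auto
  show ?thesis
  proof
    assume W: "W = (q/p) *\<^sub>R mat 1"
    have TW: "(\<lambda>x. m' + W *v (x - m)) = Tc"
      unfolding W Tc_def c_def by (auto simp: scaleR_matrix_vector_assoc[symmetric] matrix_vector_mul_lid)
    show "optimal_transport_map (mvn m (p\<^sup>2 *\<^sub>R S0)) (mvn m' (q\<^sup>2 *\<^sub>R S0)) (\<lambda>x. m' + W *v (x - m))"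
      unfolding TW optimal_transport_map_def P_def[symmetric] Q_def[symmetric]
    proof (intro conjI allI impI Tctr)
      fix S assume "transport_map P Q S"
      then have Sm: "S \<in> borel_measurable (mvn m (p\<^sup>2 *\<^sub>R S0))" and Sd: "distr (mvn m (p\<^sup>2 *\<^sub>R S0)) borel S = mvn m' (q\<^sup>2 *\<^sub>R S0)"
        unfolding transport_map_def P_def Q_def by auto
      show "(\<integral>\<^sup>+x. ennreal ((norm (x - Tc x))^2) \<partial>P) \<le> (\<integral>\<^sup>+x. ennreal ((norm (x - S x))^2) \<partial>P)"
      proof -
        have "(\<integral>\<^sup>+x. ennreal ((norm (x - Tc x))^2) \<partial>P) = ennreal (I0 p q m m')" by (rule costTc)
        also have "\<dots> \<le> ennreal (I0 p q m m' + (\<integral>x. (norm ((q/p) *\<^sub>R (x - m) - (S x - m')))^2 / (q/p) \<partial>P))"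
          using Rnn[of S] by (intro ennreal_leI) simp
        also have "\<dots> = (\<integral>\<^sup>+x. ennreal ((norm (x - S x))^2) \<partial>P)"
          unfolding P_def by (rule cost_decomp(2)[OF p q Sm Sd, symmetric])
        finally show ?thesis .
      qed
    qed
  next
    assume opt: "optimal_transport_map (mvn m (p\<^sup>2 *\<^sub>R S0)) (mvn m' (q\<^sup>2 *\<^sub>R S0)) (\<lambda>x. m' + W *v (x - m))"
    define TW where "TW = (\<lambda>x. m' + W *v (x - m))"
    have Wm: "TW \<in> borel_measurable (mvn m (p\<^sup>2 *\<^sub>R S0))" and Wd: "distr (mvn m (p\<^sup>2 *\<^sub>R S0)) borel TW = mvn m' (q\<^sup>2 *\<^sub>R S0)"
      using opt unfolding optimal_transport_map_def transport_map_def TW_def by auto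
    have le: "(\<integral>\<^sup>+x. ennreal ((norm (x - TW x))^2) \<partial>P) \<le> (\<integral>\<^sup>+x. ennreal ((norm (x - Tc x))^2) \<partial>P)"
      using opt Tctr unfolding optimal_transport_map_def TW_def P_def Q_def by auto
    define RW where "RW = (\<lambda>x. (norm ((q/p) *\<^sub>R (x - m) - (TW x - m')))^2 / (q/p))"
    have iRW: "integrable P RW" using cost_decomp(1)[OF p q Wm Wd] unfolding RW_def P_def .
    have "ennreal (I0 p q m m' + (\<integral>x. RW x \<partial>P)) \<le> ennreal (I0 p q m m')"
      using le unfolding costTc using cost_decomp(2)[OF p q Wm Wd] by (simp add: RW_def P_def)
    then have "I0 p q m m' + (\<integral>x. RW x \<partial>P) \<le> I0 p q m m'"
      using I0nn by (simp add: ennreal_le_iff)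
    moreover have "(\<integral>x. RW x \<partial>P) \<ge> 0" using Rnn[of TW] unfolding RW_def .
    ultimately have "(\<integral>x. RW x \<partial>P) = 0" by simp
    then have "AE x in P. RW x = 0"
      using integral_nonneg_eq_0_iff_AE[OF iRW] p q by (simp add: RW_def)
    then have "AE x in P. W *v (x - m) = c *\<^sub>R (x - m)"
    proof (rule AE_mp, intro AE_I2 impI)
      fix x assume "RW x = 0"
      then have "c *\<^sub>R (x - m) - (TW x - m') = 0" using c unfolding RW_def c_def[symmetric] by simp
      then show "W *v (x - m) = c *\<^sub>R (x - m)" unfolding TW_def by simp
    qed
    then have "AE x in lborel. 0 < ennreal (dens p (x - m)) \<longrightarrow> W *v (x - m) = c *\<^sub>R (x - m)"
      unfolding P_def mvn_eq[OF p] by (subst (asm) AE_density) auto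
    then have ae: "AE x in lborel. W *v (x - m) = c *\<^sub>R (x - m)"
      using dens_pos[OF p] by simp
    define U where "U = {x::real^'n. W *v (x - m) \<noteq> c *\<^sub>R (x - m)}"
    have "continuous_on UNIV (\<lambda>x::real^'n. W *v x)"
      by (simp add: linear_continuous_on matrix_vector_mul_linear linear_linear)
    then have "continuous_on UNIV (\<lambda>x::real^'n. W *v x - W *v m)"
      by (intro continuous_intros)
    then have cont: "continuous_on UNIV (\<lambda>x::real^'n. W *v (x - m))"
      by (simp add: matrix_vector_mult_diff_distrib)
    have oU: "open U" unfolding U_def
      by (intro open_Collect_neq cont continuous_intros)
    have Ub: "U \<in> sets lborel" using oU by simp
    have "emeasure lborel U = 0"
      using ae by (subst (asm) AE_iff_measurable[OF Ub]) (auto simp: U_def)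
    then have "U \<in> null_sets lborel" using Ub by auto
    then have "U \<in> null_sets lebesgue" by (rule null_sets_completionI)
    then have "negligible U" by (simp add: negligible_iff_null_sets)
    then have "U = {}" using open_not_negligible[OF oU] by blast
    then have allx: "W *v (x - m) = c *\<^sub>R (x - m)" for x unfolding U_def by auto
    show "W = (q/p) *\<^sub>R mat 1"
    proof (subst matrix_eq, intro allI)
      fix y :: "real^'n"
      show "W *v y = ((q/p) *\<^sub>R mat 1) *v y"
        using allx[of "y + m"] by (simp add: c_def scaleR_matrix_vector_assoc[symmetric] matrix_vector_mul_lid)
    qed
  qed
qed

end

theorem mainTheorem7:
  fixes A D :: "real^'n^'n" and mu :: "nat \<Rightarrow> real^'n" and sigma :: "nat \<Rightarrow> real"
    and s :: nat and W :: "real^'n^'n"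
  assumes inv: "invertible (mat 1 - A)"
    and sig0: "sigma 0 > 0" and sig1: "sigma 1 > 0"
    and Ddiag: "\<forall>i j. i \<noteq> j \<longrightarrow> D $ i $ j = 0"
    and Dpos: "\<forall>i. D $ i $ i > 0"
    and s01: "s \<in> {0, 1}"
  shows "let B = matrix_inv (mat 1 - A); s' = 1 - s;
             T = (\<lambda>x. B *v mu s' + W *v (x - B *v mu s))
         in (optimal_transport_map (scm_law B D (mu s) (sigma s)) (scm_law B D (mu s') (sigma s')) T
               \<longleftrightarrow> W = (sigma s' / sigma s) *\<^sub>R mat 1)
          \<and> (optimal_transport_map (scm_law B D (mu s) (sigma s)) (scm_law B D (mu s') (sigma s')) T
               \<longrightarrow> (\<forall>x. T x = cf_map B (mu s) (sigma s) (mu s') (sigma s') x))"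
proof -
  interpret g: gs "mat 1 - A" D using inv Ddiag Dpos by unfold_locales
  define B where "B = matrix_inv (mat 1 - A)"
  define s' where "s' = 1 - s"
  have p: "sigma s > 0" and q: "sigma s' > 0" using s01 sig0 sig1 by (auto simp: s'_def)
  have law: "scm_law B D m0 sg = mvn m0' (sg\<^sup>2 *\<^sub>R g.S0)" if "m0' = B *v m0" for m0 sg m0'
    using that by (simp add: scm_law_def g.S0_def g.B_def B_def)
  have iff: "optimal_transport_map (scm_law B D (mu s) (sigma s)) (scm_law B D (mu s') (sigma s'))
      (\<lambda>x. B *v mu s' + W *v (x - B *v mu s)) \<longleftrightarrow> W = (sigma s' / sigma s) *\<^sub>R mat 1"
    unfolding law[OF refl] by (rule g.opt_iff[OF p q])
  have cf: "(\<lambda>x. B *v mu s' + W *v (x - B *v mu s)) x = cf_map B (mu s) (sigma s) (mu s') (sigma s') x"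
    if "W = (sigma s' / sigma s) *\<^sub>R mat 1" for x
    using that by (simp add: cf_map_def scaleR_matrix_vector_assoc[symmetric] matrix_vector_mul_lid)
  have main: "(optimal_transport_map (scm_law B D (mu s) (sigma s)) (scm_law B D (mu s') (sigma s'))
      (\<lambda>x. B *v mu s' + W *v (x - B *v mu s)) \<longleftrightarrow> W = (sigma s' / sigma s) *\<^sub>R mat 1)
    \<and> (optimal_transport_map (scm_law B D (mu s) (sigma s)) (scm_law B D (mu s') (sigma s'))
      (\<lambda>x. B *v mu s' + W *v (x - B *v mu s))
      \<longrightarrow> (\<forall>x. (\<lambda>x. B *v mu s' + W *v (x - B *v mu s)) x = cf_map B (mu s) (sigma s) (mu s') (sigma s') x))"
  proof (intro conjI impI allI)
    show "optimal_transport_map (scm_law B D (mu s) (sigma s)) (scm_law B D (mu s') (sigma s'))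
      (\<lambda>x. B *v mu s' + W *v (x - B *v mu s)) \<longleftrightarrow> W = (sigma s' / sigma s) *\<^sub>R mat 1"
      by (rule iff)
  next
    fix x
    assume "optimal_transport_map (scm_law B D (mu s) (sigma s)) (scm_law B D (mu s') (sigma s'))
      (\<lambda>x. B *v mu s' + W *v (x - B *v mu s))"
    then have "W = (sigma s' / sigma s) *\<^sub>R mat 1" using iff by (rule iffD1[rotated])
    then show "(\<lambda>x. B *v mu s' + W *v (x - B *v mu s)) x = cf_map B (mu s) (sigma s) (mu s') (sigma s') x"
      by (rule cf)
  qed
  then show ?thesis unfolding Let_def B_def s'_def .
qed

end
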